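(* Let $A$ be a rational matrix. Then $A$ is totally equimodular if and only if every matrix obtained from $A$ by a finite (possibly empty) sequence of pivots and trims is essentially $0,\pm1$.
   Context: An $m\times n$ matrix is equimodular if it has full row rank $m$ and all its nonzero $m\times m$ minors have the same absolute value. A matrix is totally equimodular if every set of linearly independent rows of it forms an equimodular matrix. A pivot of a matrix $A$ is a position $p=(i,j)$ with $A_i^j\neq 0$. The $p$-pivot $A/p$ is obtained from $A$ by dividing row $i$ by $A_i^j$ and then adding suitable multiples of this new row to the other rows so that column $j$ becomes the $i$-th unit vector. The $p$-trim $A/\!\!/p$ is obtained from $A/p$ by deleting row $i$ and column $j$. A matrix is essentially $0,\pm1$ if, in each row, all nonzero entries have the same absolute value. *)

theory Defs
  imports "Jordan_Normal_Form.DL_Rank" "Jordan_Normal_Form.DL_Submatrix"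
begin

text \<open>Matrices are Jordan_Normal_Form matrices; indices are 0-based.
  The rank is the library rank (dimension of the column space).\<close>

definition full_row_rank :: "'a::field mat \<Rightarrow> bool" where
  "full_row_rank A \<longleftrightarrow> vec_space.rank (dim_row A) A = dim_row A"

definition equimodular :: "'a::linordered_field mat \<Rightarrow> bool" where
  "equimodular A \<longleftrightarrow> full_row_rank A \<and>
     (\<forall>J K. J \<subseteq> {..<dim_col A} \<longrightarrow> K \<subseteq> {..<dim_col A} \<longrightarrow>
        card J = dim_row A \<longrightarrow> card K = dim_row A \<longrightarrow>
        det (submatrix A UNIV J) \<noteq> 0 \<longrightarrow> det (submatrix A UNIV K) \<noteq> 0 \<longrightarrow>
        \<bar>det (submatrix A UNIV J)\<bar> = \<bar>det (submatrix A UNIV K)\<bar>)"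

text \<open>A set I of row indices is linearly independent iff the matrix formed by
  these rows has full row rank.\<close>
definition totally_equimodular :: "'a::linordered_field mat \<Rightarrow> bool" where
  "totally_equimodular A \<longleftrightarrow>
     (\<forall>I. I \<subseteq> {..<dim_row A} \<longrightarrow> full_row_rank (submatrix A I UNIV) \<longrightarrow>
          equimodular (submatrix A I UNIV))"

definition is_pivot :: "'a::field mat \<Rightarrow> nat \<Rightarrow> nat \<Rightarrow> bool" where
  "is_pivot A i j \<longleftrightarrow> i < dim_row A \<and> j < dim_col A \<and> A $$ (i, j) \<noteq> 0"

definition pivot_mat :: "'a::field mat \<Rightarrow> nat \<Rightarrow> nat \<Rightarrow> 'a mat" where
  "pivot_mat A i j = mat (dim_row A) (dim_col A) (\<lambda>(k, l).
      if k = i then A $$ (i, l) / A $$ (i, j)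
      else A $$ (k, l) - A $$ (k, j) * (A $$ (i, l) / A $$ (i, j)))"

definition trim_mat :: "'a::field mat \<Rightarrow> nat \<Rightarrow> nat \<Rightarrow> 'a mat" where
  "trim_mat A i j = submatrix (pivot_mat A i j) (- {i}) (- {j})"

definition pivot_trim_step :: "'a::field mat \<Rightarrow> 'a mat \<Rightarrow> bool" where
  "pivot_trim_step A B \<longleftrightarrow>
     (\<exists>i j. is_pivot A i j \<and> (B = pivot_mat A i j \<or> B = trim_mat A i j))"

definition essentially_01 :: "'a::linordered_field mat \<Rightarrow> bool" where
  "essentially_01 A \<longleftrightarrow>
     (\<forall>i < dim_row A. \<forall>j < dim_col A. \<forall>k < dim_col A.
        A $$ (i, j) \<noteq> 0 \<longrightarrow> A $$ (i, k) \<noteq> 0 \<longrightarrow> \<bar>A $$ (i, j)\<bar> = \<bar>A $$ (i, k)\<bar>)"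

end

theory Submission imports Defs "Jordan_Normal_Form.DL_Rank_Submatrix"
begin

lemma pick_image:
  assumes "strict_mono_on S (f::nat\<Rightarrow>nat)" "n < card S"
  shows "pick (f ` S) n = f (pick S n)"
proof -
  define x where "x = pick S n"
  have x: "x \<in> S" "card {a\<in>S. a < x} = n"
    using pick_in_set_le[OF assms(2)] card_pick_le[OF assms(2)] x_def by auto
  have inj: "inj_on f S" using assms(1) strict_mono_on_imp_inj_on by blast
  have lt: "f a < f x \<longleftrightarrow> a < x" if "a \<in> S" for a
  proof
    assume "a < x" then show "f a < f x" using x(1) that assms(1) by (simp add: strict_mono_onD)
  next
    assume "f a < f x"
    show "a < x"
    proof (rule ccontr)
      assume "\<not> a < x"
      then have "x \<le> a" by simp
      then have "f x \<le> f a" using x(1) that assms(1) strict_mono_on_leD by blast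
      then show False using \<open>f a < f x\<close> by simp
    qed
  qed
  have "{b\<in>f ` S. b < f x} = f ` {a\<in>S. a < x}" using lt by auto
  then have "card {b\<in>f ` S. b < f x} = n"
    using x(2) card_image[OF inj_on_subset[OF inj]] by (metis (no_types, lifting) mem_Collect_eq subsetI)
  then show ?thesis using pick_card_in_set[of "f x" "f ` S"] x(1) x_def by auto
qed

lemma pick_strict_mono: "strict_mono_on {..<card S} (pick S)"
  by (rule strict_mono_onI) (simp add: pick_mono_le)

lemma pick_image_lessThan:
  assumes "finite S" shows "pick S ` {..<card S} = S"
proof
  show "pick S ` {..<card S} \<subseteq> S" using pick_in_set_le by blast
  show "S \<subseteq> pick S ` {..<card S}"
  proof
    fix x assume "x \<in> S"
    have "{a\<in>S. a < x} \<subset> S" using \<open>x\<in>S\<close> by auto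
    then have "card {a\<in>S. a < x} < card S" using assms psubset_card_mono by blast
    show "x \<in> pick S ` {..<card S}"
    proof (rule image_eqI)
      show "x = pick S (card {a\<in>S. a < x})" using pick_card_in_set[OF \<open>x\<in>S\<close>] by simp
      show "card {a\<in>S. a < x} \<in> {..<card S}" using \<open>card {a\<in>S. a < x} < card S\<close> by simp
    qed
  qed
qed

lemma pick_lessThan: assumes "r < n" shows "pick {..<n} r = r"
proof -
  have "{a\<in>{..<n}. a < r} = {..<r}" using \<open>r<n\<close> by auto
  then have "card {a\<in>{..<n}. a < r} = r" by simp
  then show ?thesis using pick_card_in_set[of r "{..<n}"] \<open>r<n\<close> by simp
qed

lemma pick_restrict:
  assumes "r < card {a\<in>I. a < n}"
  shows "pick I r = pick {a\<in>I. a < n} r"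
proof -
  define x where "x = pick {a\<in>I. a < n} r"
  have x: "x \<in> {a\<in>I. a < n}" "card {a\<in>{a\<in>I. a < n}. a < x} = r"
    using pick_in_set_le[OF assms] card_pick_le[OF assms] x_def by auto
  have "{a\<in>I. a < x} = {a\<in>{a\<in>I. a < n}. a < x}" using x(1) by auto
  then have "pick I r = x" using pick_card_in_set[of x I] x by auto
  then show ?thesis using x_def by simp
qed

lemma strict_mono_on_subset': "strict_mono_on A f \<Longrightarrow> B \<subseteq> A \<Longrightarrow> strict_mono_on B f"
  unfolding strict_mono_on_def by blast

lemma submatrix_canon:
  assumes "I \<subseteq> {..<dim_row A}" "K \<subseteq> {..<dim_col A}"
  shows "submatrix A I K = mat (card I) (card K) (\<lambda>(r,c). A $$ (pick I r, pick K c))"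
proof -
  have "{i. i<dim_row A \<and> i\<in>I} = I" "{i. i<dim_col A \<and> i\<in>K} = K" using assms by auto
  then show ?thesis unfolding submatrix_def by simp
qed

lemma submatrix_restrict:
  "submatrix A I K = submatrix A {a\<in>I. a < dim_row A} {a\<in>K. a < dim_col A}"
proof -
  have e: "{i. i<dim_row A \<and> i\<in>I} = {a\<in>I. a < dim_row A}" "{i. i<dim_col A \<and> i\<in>K} = {a\<in>K. a < dim_col A}" by auto
  have "submatrix A {a\<in>I. a < dim_row A} {a\<in>K. a < dim_col A} = 
     mat (card {a\<in>I. a < dim_row A}) (card {a\<in>K. a < dim_col A}) (\<lambda>(r,c). A $$ (pick {a\<in>I. a < dim_row A} r, pick {a\<in>K. a < dim_col A} c))"
    by (rule submatrix_canon) auto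
  also have "\<dots> = submatrix A I K" unfolding submatrix_def e
  proof (rule eq_matI)
    fix r c assume "r < dim_row (mat (card {a \<in> I. a < dim_row A}) (card {a \<in> K. a < dim_col A}) (\<lambda>(r, c). A $$ (pick I r, pick K c)))"
      "c < dim_col (mat (card {a \<in> I. a < dim_row A}) (card {a \<in> K. a < dim_col A}) (\<lambda>(r, c). A $$ (pick I r, pick K c)))"
    then have rc: "r < card {a \<in> I. a < dim_row A}" "c < card {a \<in> K. a < dim_col A}" by auto
    then show "mat (card {a \<in> I. a < dim_row A}) (card {a \<in> K. a < dim_col A})
          (\<lambda>(r, c). A $$ (pick {a \<in> I. a < dim_row A} r, pick {a \<in> K. a < dim_col A} c)) $$ (r, c) =
         mat (card {a \<in> I. a < dim_row A}) (card {a \<in> K. a < dim_col A}) (\<lambda>(r, c). A $$ (pick I r, pick K c)) $$ (r, c)"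
      using pick_restrict[OF rc(1)] pick_restrict[OF rc(2)] by simp
  qed auto
  finally show ?thesis by simp
qed

lemma submatrix_submatrix:
  assumes "I \<subseteq> {..<dim_row A}" "K \<subseteq> {..<dim_col A}" "I' \<subseteq> {..<card I}" "K' \<subseteq> {..<card K}"
  shows "submatrix (submatrix A I K) I' K' = submatrix A (pick I ` I') (pick K ` K')"
proof -
  have sm: "strict_mono_on I' (pick I)" "strict_mono_on K' (pick K)"
    using pick_strict_mono assms(3,4) strict_mono_on_subset' by blast+
  have inj: "inj_on (pick I) I'" "inj_on (pick K) K'" using sm strict_mono_on_imp_inj_on by blast+
  have sub: "pick I ` I' \<subseteq> {..<dim_row A}" "pick K ` K' \<subseteq> {..<dim_col A}"
    using assms pick_in_set_le by fastforce+
  have c: "card (pick I ` I') = card I'" "card (pick K ` K') = card K'"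
    using card_image inj by auto
  have d: "dim_row (submatrix A I K) = card I" "dim_col (submatrix A I K) = card K" 
    using submatrix_canon[OF assms(1,2)] by auto
  have s2: "I' \<subseteq> {..<dim_row (submatrix A I K)}" "K' \<subseteq> {..<dim_col (submatrix A I K)}" using d assms by auto
  have fI': "finite I'" "finite K'" using assms(3,4) finite_subset by blast+
  show ?thesis
    unfolding submatrix_canon[OF sub] c submatrix_canon[OF s2]
  proof (rule eq_matI)
    fix r c assume "r < dim_row (mat (card I') (card K') (\<lambda>(r, c). A $$ (pick (pick I ` I') r, pick (pick K ` K') c)))"
      "c < dim_col (mat (card I') (card K') (\<lambda>(r, c). A $$ (pick (pick I ` I') r, pick (pick K ` K') c)))"
    then have rc: "r < card I'" "c < card K'" by auto
    have "pick I' r < card I" "pick K' c < card K" using pick_in_set_le[OF rc(1)] pick_in_set_le[OF rc(2)] assms(3,4) by auto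
    then show "mat (card I') (card K') (\<lambda>(r, c). submatrix A I K $$ (pick I' r, pick K' c)) $$ (r, c) =
         mat (card I') (card K') (\<lambda>(r, c). A $$ (pick (pick I ` I') r, pick (pick K ` K') c)) $$ (r, c)"
      using rc by (simp add: submatrix_canon[OF assms(1,2)] pick_image[OF sm(1) rc(1)] pick_image[OF sm(2) rc(2)])
  qed auto
qed

lemma (in vec_space) rank_le_nr:
  assumes "A \<in> carrier_mat n nc" shows "rank A \<le> n"
proof -
  obtain S where S: "maximal S (\<lambda>T. T \<subseteq> set (cols A) \<and> lin_indpt T)"
    using maximal_exists[of "(\<lambda>T. T \<subseteq> set (cols A) \<and> lin_indpt T)" "card (set (cols A))" "{}"]
    by (meson List.finite_set card_mono empty_iff empty_subsetI finite_lin_indpt2 rev_finite_subset)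
  then have "S \<subseteq> set (cols A)" "lin_indpt S" unfolding maximal_def by auto
  moreover have "set (cols A) \<subseteq> carrier_vec n" using assms cols_dim by blast
  ultimately have "card S \<le> dim" using li_le_dim(2)[OF fin_dim] by blast
  then show ?thesis using rank_card_indpt[OF assms S] dim_is_n by simp
qed

lemma full_row_rank_minor:
  fixes C :: "'a::field mat"
  assumes "K \<subseteq> {..<dim_col C}" "card K = dim_row C" "det (submatrix C UNIV K) \<noteq> 0"
  shows "full_row_rank C"
proof -
  have Cc: "C \<in> carrier_mat (dim_row C) (dim_col C)" by simp
  have "card {j. j < dim_col C \<and> j \<in> K} \<le> vec_space.rank (dim_row C) C"
    by (rule vec_space.rank_gt_minor[OF Cc assms(3)])
  moreover have "{j. j < dim_col C \<and> j \<in> K} = K" using assms(1) by auto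
  moreover have "vec_space.rank (dim_row C) C \<le> dim_row C" by (rule vec_space.rank_le_nr[OF Cc])
  ultimately show ?thesis unfolding full_row_rank_def using assms(2) by simp
qed

lemma insert_index_image': assumes "s < m"
  shows "(\<lambda>r. if r < s then r else Suc r) ` {..<m-1} = {..<m} - {s}"
proof
  show "(\<lambda>r. if r < s then r else Suc r) ` {..<m-1} \<subseteq> {..<m} - {s}" using assms by auto
  show "{..<m} - {s} \<subseteq> (\<lambda>r. if r < s then r else Suc r) ` {..<m-1}"
  proof
    fix x assume x: "x \<in> {..<m} - {s}"
    show "x \<in> (\<lambda>r. if r < s then r else Suc r) ` {..<m-1}"
    proof (cases "x < s")
      case True then show ?thesis using x assms by (intro image_eqI[of _ _ x]) auto
    next
      case False then show ?thesis using x assms by (intro image_eqI[of _ _ "x - 1"]) auto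
    qed
  qed
qed

lemma mat_delete_submatrix:
  assumes M: "M \<in> carrier_mat m n" and s: "s < m" and t: "t < n"
  shows "mat_delete M s t = submatrix M ({..<m}-{s}) ({..<n}-{t})"
proof -
  define f where "f = (\<lambda>r::nat. if r < s then r else Suc r)"
  define g where "g = (\<lambda>r::nat. if r < t then r else Suc r)"
  have fi: "f ` {..<m-1} = {..<m} - {s}" unfolding f_def by (rule insert_index_image'[OF s])
  have gi: "g ` {..<n-1} = {..<n} - {t}" unfolding g_def by (rule insert_index_image'[OF t])
  have fm: "strict_mono_on {..<m-1} f" unfolding f_def by (rule strict_mono_onI) auto
  have gm: "strict_mono_on {..<n-1} g" unfolding g_def by (rule strict_mono_onI) auto
  have c: "card ({..<m}-{s}) = m - 1" "card ({..<n}-{t}) = n - 1" using s t by auto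
  have pf: "pick ({..<m}-{s}) r = f r" if "r < m - 1" for r
    using pick_image[OF fm, of r] that pick_lessThan[OF that] fi by simp
  have pg: "pick ({..<n}-{t}) r = g r" if "r < n - 1" for r
    using pick_image[OF gm, of r] that pick_lessThan[OF that] gi by simp
  have "submatrix M ({..<m}-{s}) ({..<n}-{t}) = mat (m-1) (n-1) (\<lambda>(r,c). M $$ (pick ({..<m}-{s}) r, pick ({..<n}-{t}) c))"
    using submatrix_canon[of "{..<m}-{s}" M "{..<n}-{t}"] M c by auto
  also have "\<dots> = mat_delete M s t" unfolding mat_delete_def
    by (rule eq_matI) (use M in \<open>auto simp: pf pg f_def g_def\<close>)
  finally show ?thesis by simp
qed

lemma submatrix_delete:
  assumes I: "I \<subseteq> {..<dim_row A}" and K: "K \<subseteq> {..<dim_col A}" and s: "s < card I" and t: "t < card K"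
  shows "mat_delete (submatrix A I K) s t = submatrix A (I - {pick I s}) (K - {pick K t})"
proof -
  have fin: "finite I" "finite K" using I K finite_subset by blast+
  have M: "submatrix A I K \<in> carrier_mat (card I) (card K)" using submatrix_canon[OF I K] by simp
  have d: "dim_row (submatrix A I K) = card I" "dim_col (submatrix A I K) = card K" using M by auto
  have "mat_delete (submatrix A I K) s t = submatrix (submatrix A I K) ({..<card I}-{s}) ({..<card K}-{t})"
    by (rule mat_delete_submatrix[OF M s t])
  also have "\<dots> = submatrix A (pick I ` ({..<card I}-{s})) (pick K ` ({..<card K}-{t}))"
    by (rule submatrix_submatrix[OF I K]) auto
  also have "pick I ` ({..<card I}-{s}) = I - {pick I s}"
  proof -
    have "inj_on (pick I) {..<card I}" using pick_strict_mono strict_mono_on_imp_inj_on by blast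
    then have "pick I ` ({..<card I}-{s}) = pick I ` {..<card I} - pick I ` {s}"
      using s by (intro inj_on_image_set_diff) auto
    then show ?thesis using pick_image_lessThan[OF fin(1)] by simp
  qed
  also have "pick K ` ({..<card K}-{t}) = K - {pick K t}"
  proof -
    have "inj_on (pick K) {..<card K}" using pick_strict_mono strict_mono_on_imp_inj_on by blast
    then have "pick K ` ({..<card K}-{t}) = pick K ` {..<card K} - pick K ` {t}"
      using t by (intro inj_on_image_set_diff) auto
    then show ?thesis using pick_image_lessThan[OF fin(2)] by simp
  qed
  finally show ?thesis .
qed

lemma pos_in:
  assumes "finite I" "i \<in> I"
  shows "card {a\<in>I. a < i} < card I" "pick I (card {a\<in>I. a < i}) = i"
proof -
  have "{a\<in>I. a < i} \<subset> I" using assms by auto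
  then show "card {a\<in>I. a < i} < card I" using assms psubset_card_mono by blast
  show "pick I (card {a\<in>I. a < i}) = i" using pick_card_in_set[OF assms(2)] .
qed

lemma pick_inj:
  assumes "r < card I" "q < card I" "pick I r = pick I q" shows "r = q"
  using pick_strict_mono[of I] strict_mono_on_imp_inj_on assms unfolding inj_on_def by blast

lemma abs_cofactor: "\<bar>cofactor (M::'a::linordered_field mat) s t\<bar> = \<bar>det (mat_delete M s t)\<bar>"
  unfolding cofactor_def by (simp add: abs_mult power_abs)

lemma minor_expand:
  fixes A :: "'a::linordered_field mat"
  assumes I: "I \<subseteq> {..<dim_row A}" and K: "K \<subseteq> {..<dim_col A}" and c: "card I = card K"
    and i: "i \<in> I" and j: "j \<in> K" and z: "\<And>r. r \<in> I \<Longrightarrow> r \<noteq> i \<Longrightarrow> A $$ (r, j) = 0"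
  shows "\<bar>det (submatrix A I K)\<bar> = \<bar>A $$ (i,j)\<bar> * \<bar>det (submatrix A (I-{i}) (K-{j}))\<bar>"
proof -
  have fin: "finite I" "finite K" using I K finite_subset by blast+
  define s where "s = card {a\<in>I. a < i}"
  define t where "t = card {a\<in>K. a < j}"
  have s: "s < card I" "pick I s = i" using pos_in[OF fin(1) i] s_def by auto
  have t: "t < card K" "pick K t = j" using pos_in[OF fin(2) j] t_def by auto
  define M where "M = submatrix A I K"
  have M: "M \<in> carrier_mat (card I) (card I)" using submatrix_canon[OF I K] c M_def by simp
  have Me: "M $$ (r, q) = A $$ (pick I r, pick K q)" if "r < card I" "q < card K" for r q
    using that submatrix_canon[OF I K] M_def by simp
  have "det M = (\<Sum>r<card I. M $$ (r,t) * cofactor M r t)"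
    by (rule laplace_expansion_column[OF M]) (use t c in simp)
  also have "\<dots> = M $$ (s,t) * cofactor M s t"
  proof -
    have "(\<Sum>r<card I. M $$ (r,t) * cofactor M r t) = M $$ (s,t) * cofactor M s t + (\<Sum>r\<in>{..<card I}-{s}. M $$ (r,t) * cofactor M r t)"
      by (rule sum.remove) (use s in auto)
    moreover have "(\<Sum>r\<in>{..<card I}-{s}. M $$ (r,t) * cofactor M r t) = 0"
    proof (rule sum.neutral, rule ballI)
      fix r assume r: "r \<in> {..<card I}-{s}"
      then have "pick I r \<in> I" using pick_in_set_le by auto
      moreover have "pick I r \<noteq> i" using pick_inj[of r I s] r s by auto
      ultimately have "A $$ (pick I r, j) = 0" using z by blast
      then show "M $$ (r,t) * cofactor M r t = 0" using Me[of r t] r t by simp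
    qed
    ultimately show ?thesis by simp
  qed
  finally have "\<bar>det M\<bar> = \<bar>M $$ (s,t)\<bar> * \<bar>det (mat_delete M s t)\<bar>"
    by (simp add: abs_mult abs_cofactor)
  moreover have "M $$ (s,t) = A $$ (i,j)" using Me[OF s(1) t(1)] s t by simp
  moreover have "mat_delete M s t = submatrix A (I-{i}) (K-{j})"
    unfolding M_def using submatrix_delete[OF I K s(1) t(1)] s t by simp
  ultimately show ?thesis unfolding M_def by simp
qed

lemma minor_zero_col:
  fixes A :: "'a::field mat"
  assumes I: "I \<subseteq> {..<dim_row A}" and K: "K \<subseteq> {..<dim_col A}" and c: "card I = card K"
    and j: "j \<in> K" and z: "\<And>r. r \<in> I \<Longrightarrow> A $$ (r, j) = 0"
  shows "det (submatrix A I K) = 0"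
proof -
  have fin: "finite I" "finite K" using I K finite_subset by blast+
  define t where "t = card {a\<in>K. a < j}"
  have t: "t < card K" "pick K t = j" using pos_in[OF fin(2) j] t_def by auto
  define M where "M = submatrix A I K"
  have M: "M \<in> carrier_mat (card I) (card I)" using submatrix_canon[OF I K] c M_def by simp
  have Me: "M $$ (r, q) = A $$ (pick I r, pick K q)" if "r < card I" "q < card K" for r q
    using that submatrix_canon[OF I K] M_def by simp
  have "det M = (\<Sum>r<card I. M $$ (r,t) * cofactor M r t)"
    by (rule laplace_expansion_column[OF M]) (use t c in simp)
  also have "\<dots> = 0"
  proof (rule sum.neutral, rule ballI)
    fix r assume r: "r \<in> {..<card I}"
    then have "pick I r \<in> I" using pick_in_set_le by auto
    then show "M $$ (r,t) * cofactor M r t = 0" using Me[of r t] r t z by simp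
  qed
  finally show ?thesis unfolding M_def .
qed

lemma minor_row_exists:
  fixes A :: "'a::field mat"
  assumes I: "I \<subseteq> {..<dim_row A}" and K: "K \<subseteq> {..<dim_col A}" and c: "card I = card K"
    and i: "i \<in> I" and nz: "det (submatrix A I K) \<noteq> 0"
  shows "\<exists>l\<in>K. det (submatrix A (I-{i}) (K-{l})) \<noteq> 0"
proof -
  have fin: "finite I" "finite K" using I K finite_subset by blast+
  define s where "s = card {a\<in>I. a < i}"
  have s: "s < card I" "pick I s = i" using pos_in[OF fin(1) i] s_def by auto
  define M where "M = submatrix A I K"
  have M: "M \<in> carrier_mat (card I) (card I)" using submatrix_canon[OF I K] c M_def by simp
  have "det M = (\<Sum>q<card I. M $$ (s,q) * cofactor M s q)"
    by (rule laplace_expansion_row[OF M s(1)])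
  then obtain q where q: "q < card I" "M $$ (s,q) * cofactor M s q \<noteq> 0"
    using nz M_def by (metis (no_types, lifting) lessThan_iff sum.neutral)
  then have "det (mat_delete M s q) \<noteq> 0" unfolding cofactor_def by auto
  moreover have "mat_delete M s q = submatrix A (I-{i}) (K-{pick K q})"
    unfolding M_def using submatrix_delete[OF I K s(1)] q c s by simp
  moreover have "pick K q \<in> K" using pick_in_set_le q c by auto
  ultimately show ?thesis by auto
qed

lemma det_addrows:
  fixes N :: "'a::comm_ring_1 mat"
  assumes N: "N \<in> carrier_mat n n" and s: "s < n" and R: "R \<subseteq> {..<n} - {s}"
  shows "det (mat n n (\<lambda>(r,c). if r \<in> R then N $$ (r,c) + e r * N $$ (s,c) else N $$ (r,c))) = det N"
proof -
  have "finite R" using R finite_subset by blast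
  then show ?thesis using R
  proof (induction R rule: finite_induct)
    case empty
    have "mat n n (\<lambda>(r,c). if r \<in> {} then N $$ (r,c) + e r * N $$ (s,c) else N $$ (r,c)) = N"
      by (rule eq_matI) (use N in auto)
    then show ?case by simp
  next
    case (insert x F)
    define P where "P = mat n n (\<lambda>(r,c). if r \<in> F then N $$ (r,c) + e r * N $$ (s,c) else N $$ (r,c))"
    have P: "P \<in> carrier_mat n n" unfolding P_def by simp
    have "mat n n (\<lambda>(r,c). if r \<in> insert x F then N $$ (r,c) + e r * N $$ (s,c) else N $$ (r,c))
       = addrow (e x) x s P"
      by (rule eq_matI) (use insert.prems insert.hyps s in \<open>auto simp: P_def mat_addrow_def\<close>)
    moreover have "det (addrow (e x) x s P) = det P"
      by (rule det_addrow[OF s _ P]) (use insert.prems in auto)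
    moreover have "det P = det N" unfolding P_def using insert by auto
    ultimately show ?case by simp
  qed
qed

lemma det_pivot_rows:
  fixes M :: "'a::field mat"
  assumes M: "M \<in> carrier_mat n n" and M': "M' \<in> carrier_mat n n" and s: "s < n" and a: "a \<noteq> 0"
    and e: "\<And>r c. r < n \<Longrightarrow> c < n \<Longrightarrow> M' $$ (r,c) = (if r = s then M $$ (s,c) / a else M $$ (r,c) - d r * (M $$ (s,c) / a))"
  shows "det M' = det M / a"
proof -
  define N where "N = multrow s (1/a) M"
  have N: "N \<in> carrier_mat n n" unfolding N_def using M by simp
  have dN: "det N = det M / a" unfolding N_def using det_multrow[OF s M] by simp
  have Ne: "N $$ (r,c) = (if r = s then M $$ (s,c) / a else M $$ (r,c))" if "r < n" "c < n" for r c
    unfolding N_def using that M by (auto simp: mat_multrow_def)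
  have "M' = mat n n (\<lambda>(r,c). if r \<in> {..<n}-{s} then N $$ (r,c) + (- d r) * N $$ (s,c) else N $$ (r,c))"
    by (rule eq_matI) (use M' s in \<open>auto simp: e Ne\<close>)
  then have "det M' = det N" using det_addrows[OF N s, of "{..<n}-{s}" "\<lambda>r. - d r"] by simp
  then show ?thesis using dN by simp
qed

lemma pivot_dims[simp]: "dim_row (pivot_mat A i j) = dim_row A" "dim_col (pivot_mat A i j) = dim_col A"
  unfolding pivot_mat_def by auto

lemma pivot_index:
  "k < dim_row A \<Longrightarrow> l < dim_col A \<Longrightarrow> pivot_mat A i j $$ (k,l) =
    (if k = i then A $$ (i, l) / A $$ (i, j) else A $$ (k, l) - A $$ (k, j) * (A $$ (i, l) / A $$ (i, j)))"
  unfolding pivot_mat_def by auto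

lemma pivot_col:
  assumes "is_pivot A i j" "k < dim_row A"
  shows "pivot_mat A i j $$ (k,j) = (if k = i then 1 else 0)"
  using assms unfolding is_pivot_def by (auto simp: pivot_index)

lemma pivot_minor:
  fixes A :: "'a::field mat"
  assumes p: "is_pivot A i j" and I: "I \<subseteq> {..<dim_row A}" and K: "K \<subseteq> {..<dim_col A}"
    and c: "card I = card K" and i: "i \<in> I"
  shows "det (submatrix (pivot_mat A i j) I K) = det (submatrix A I K) / A $$ (i,j)"
proof -
  let ?B = "pivot_mat A i j"
  have fin: "finite I" "finite K" using I K finite_subset by blast+
  define s where "s = card {a\<in>I. a < i}"
  have s: "s < card I" "pick I s = i" using pos_in[OF fin(1) i] s_def by auto
  have I': "I \<subseteq> {..<dim_row ?B}" and K': "K \<subseteq> {..<dim_col ?B}" using I K by auto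
  have M: "submatrix A I K \<in> carrier_mat (card I) (card I)" using submatrix_canon[OF I K] c by simp
  have M': "submatrix ?B I K \<in> carrier_mat (card I) (card I)" using submatrix_canon[OF I' K'] c by simp
  have a: "A $$ (i,j) \<noteq> 0" using p unfolding is_pivot_def by auto
  show ?thesis
  proof (rule det_pivot_rows[OF M M' s(1) a])
    fix r q assume r: "r < card I" and q: "q < card I"
    have pr: "pick I r \<in> I" "pick K q \<in> K" using pick_in_set_le r q c by auto
    then have lt: "pick I r < dim_row A" "pick K q < dim_col A" using I K by auto
    have iff: "pick I r = i \<longleftrightarrow> r = s" using pick_inj[OF r s(1)] s by auto
    have e1: "submatrix ?B I K $$ (r,q) = ?B $$ (pick I r, pick K q)"
      using submatrix_canon[OF I' K'] r q c by simp
    have e2: "submatrix A I K $$ (r,q) = A $$ (pick I r, pick K q)" "submatrix A I K $$ (s,q) = A $$ (i, pick K q)"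
      using submatrix_canon[OF I K] r q c s by auto
    show "submatrix ?B I K $$ (r,q) = (if r = s then submatrix A I K $$ (s,q) / A $$ (i,j)
         else submatrix A I K $$ (r,q) - A $$ (pick I r, j) * (submatrix A I K $$ (s,q) / A $$ (i,j)))"
      unfolding e1 e2 pivot_index[OF lt] using iff s by auto
  qed
qed

definition WTE :: "'a::linordered_field mat \<Rightarrow> bool" where
  "WTE A \<longleftrightarrow> (\<forall>I K L. I \<subseteq> {..<dim_row A} \<longrightarrow> K \<subseteq> {..<dim_col A} \<longrightarrow> L \<subseteq> {..<dim_col A} \<longrightarrow>
     card K = card I \<longrightarrow> card L = card I \<longrightarrow> det (submatrix A I K) \<noteq> 0 \<longrightarrow> det (submatrix A I L) \<noteq> 0 \<longrightarrow>
     \<bar>det (submatrix A I K)\<bar> = \<bar>det (submatrix A I L)\<bar>)"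

lemma WTED:
  assumes "WTE A" "I \<subseteq> {..<dim_row A}" "K \<subseteq> {..<dim_col A}" "L \<subseteq> {..<dim_col A}"
     "card K = card I" "card L = card I" "det (submatrix A I K) \<noteq> 0" "det (submatrix A I L) \<noteq> 0"
  shows "\<bar>det (submatrix A I K)\<bar> = \<bar>det (submatrix A I L)\<bar>"
  using assms unfolding WTE_def by blast

lemma pivot_WTE:
  fixes A :: "'a::linordered_field mat"
  assumes W: "WTE A" and p: "is_pivot A i j"
  shows "WTE (pivot_mat A i j)"
  unfolding WTE_def
proof (intro allI impI)
  let ?B = "pivot_mat A i j"
  fix S K L assume S: "S \<subseteq> {..<dim_row ?B}" and K: "K \<subseteq> {..<dim_col ?B}" and L: "L \<subseteq> {..<dim_col ?B}"
    and cK: "card K = card S" and cL: "card L = card S"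
    and nK: "det (submatrix ?B S K) \<noteq> 0" and nL: "det (submatrix ?B S L) \<noteq> 0"
  have SA: "S \<subseteq> {..<dim_row A}" and KA: "K \<subseteq> {..<dim_col A}" and LA: "L \<subseteq> {..<dim_col A}" using S K L by auto
  have a: "A $$ (i,j) \<noteq> 0" and ij: "i < dim_row A" "j < dim_col A" using p unfolding is_pivot_def by auto
  have fin: "finite S" "finite K" "finite L" using SA KA LA finite_subset by blast+
  show "\<bar>det (submatrix ?B S K)\<bar> = \<bar>det (submatrix ?B S L)\<bar>"
  proof (cases "i \<in> S")
    case True
    have eK: "det (submatrix ?B S K) = det (submatrix A S K) / A $$ (i,j)"
      using pivot_minor[OF p SA KA _ True] cK by simp
    have eL: "det (submatrix ?B S L) = det (submatrix A S L) / A $$ (i,j)"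
      using pivot_minor[OF p SA LA _ True] cL by simp
    have "\<bar>det (submatrix A S K)\<bar> = \<bar>det (submatrix A S L)\<bar>"
      by (rule WTED[OF W SA KA LA cK cL]) (use nK nL eK eL in auto)
    then show ?thesis unfolding eK eL by (simp add: abs_divide)
  next
    case False
    have z: "\<And>r. r \<in> S \<Longrightarrow> ?B $$ (r, j) = 0" using pivot_col[OF p] SA False by auto
    have jK: "j \<notin> K" using minor_zero_col[OF S K _ _ z] cK nK by auto
    have jL: "j \<notin> L" using minor_zero_col[OF S L _ _ z] cL nL by auto
    have S2: "insert i S \<subseteq> {..<dim_row A}" using SA ij by auto
    have K2: "insert j K \<subseteq> {..<dim_col A}" "insert j L \<subseteq> {..<dim_col A}" using KA LA ij by auto
    have c2: "card (insert j K) = card (insert i S)" "card (insert j L) = card (insert i S)"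
      using fin False jK jL cK cL by auto
    have z2: "\<And>r. r \<in> insert i S \<Longrightarrow> r \<noteq> i \<Longrightarrow> ?B $$ (r, j) = 0" using z by auto
    have Bij: "?B $$ (i,j) = 1" using pivot_col[OF p ij(1)] by simp
    have d1: "insert i S - {i} = S" "insert j K - {j} = K" "insert j L - {j} = L" using False jK jL by auto
    have xK: "\<bar>det (submatrix ?B (insert i S) (insert j K))\<bar> = \<bar>det (submatrix ?B S K)\<bar>"
      using minor_expand[of "insert i S" ?B "insert j K" i j] S2 K2 c2 z2 Bij d1 by auto
    have xL: "\<bar>det (submatrix ?B (insert i S) (insert j L))\<bar> = \<bar>det (submatrix ?B S L)\<bar>"
      using minor_expand[of "insert i S" ?B "insert j L" i j] S2 K2 c2 z2 Bij d1 by auto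
    have pK: "det (submatrix ?B (insert i S) (insert j K)) = det (submatrix A (insert i S) (insert j K)) / A $$ (i,j)"
      using pivot_minor[OF p S2 K2(1)] c2 by simp
    have pL: "det (submatrix ?B (insert i S) (insert j L)) = det (submatrix A (insert i S) (insert j L)) / A $$ (i,j)"
      using pivot_minor[OF p S2 K2(2)] c2 by simp
    have "\<bar>det (submatrix A (insert i S) (insert j K))\<bar> = \<bar>det (submatrix A (insert i S) (insert j L))\<bar>"
      by (rule WTED[OF W S2 K2 c2]) (use xK xL pK pL nK nL in auto)
    then show ?thesis using xK xL pK pL by (simp add: abs_divide)
  qed
qed

lemma trim_eq: "trim_mat A i j = submatrix (pivot_mat A i j) ({..<dim_row A} - {i}) ({..<dim_col A} - {j})"
proof -
  have "trim_mat A i j = submatrix (pivot_mat A i j) {a\<in>-{i}. a < dim_row A} {a\<in>-{j}. a < dim_col A}"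
    unfolding trim_mat_def using submatrix_restrict[of "pivot_mat A i j" "-{i}" "-{j}"] by simp
  moreover have "{a\<in>-{i}. a < dim_row A} = {..<dim_row A} - {i}" "{a\<in>-{j}. a < dim_col A} = {..<dim_col A} - {j}" by auto
  ultimately show ?thesis by simp
qed

lemma sub_WTE:
  fixes B :: "'a::linordered_field mat"
  assumes W: "WTE B" and R: "R \<subseteq> {..<dim_row B}" and C: "C \<subseteq> {..<dim_col B}"
  shows "WTE (submatrix B R C)"
  unfolding WTE_def
proof (intro allI impI)
  let ?T = "submatrix B R C"
  have d: "dim_row ?T = card R" "dim_col ?T = card C" using submatrix_canon[OF R C] by auto
  fix S K L assume S: "S \<subseteq> {..<dim_row ?T}" and K: "K \<subseteq> {..<dim_col ?T}" and L: "L \<subseteq> {..<dim_col ?T}"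
    and cK: "card K = card S" and cL: "card L = card S"
    and nK: "det (submatrix ?T S K) \<noteq> 0" and nL: "det (submatrix ?T S L) \<noteq> 0"
  have S': "S \<subseteq> {..<card R}" and K': "K \<subseteq> {..<card C}" and L': "L \<subseteq> {..<card C}" using S K L d by auto
  have eK: "submatrix ?T S K = submatrix B (pick R ` S) (pick C ` K)" by (rule submatrix_submatrix[OF R C S' K'])
  have eL: "submatrix ?T S L = submatrix B (pick R ` S) (pick C ` L)" by (rule submatrix_submatrix[OF R C S' L'])
  have inj: "inj_on (pick R) S" "inj_on (pick C) K" "inj_on (pick C) L"
    using pick_strict_mono strict_mono_on_imp_inj_on S' K' L' inj_on_subset by blast+
  have cards: "card (pick R ` S) = card S" "card (pick C ` K) = card K" "card (pick C ` L) = card L"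
    using card_image inj by auto
  have subs: "pick R ` S \<subseteq> {..<dim_row B}" "pick C ` K \<subseteq> {..<dim_col B}" "pick C ` L \<subseteq> {..<dim_col B}"
    using R C S' K' L' pick_in_set_le by fastforce+
  show "\<bar>det (submatrix ?T S K)\<bar> = \<bar>det (submatrix ?T S L)\<bar>"
    unfolding eK eL by (rule WTED[OF W subs]) (use cards cK cL nK nL eK eL in auto)
qed

lemma WTE_step:
  fixes A :: "'a::linordered_field mat"
  assumes W: "WTE A" and st: "pivot_trim_step A B"
  shows "WTE B"
proof -
  obtain i j where p: "is_pivot A i j" and B: "B = pivot_mat A i j \<or> B = trim_mat A i j"
    using st unfolding pivot_trim_step_def by blast
  have WP: "WTE (pivot_mat A i j)" by (rule pivot_WTE[OF W p])
  show ?thesis using B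
  proof
    assume "B = trim_mat A i j"
    then show ?thesis unfolding trim_eq using sub_WTE[OF WP] by auto
  qed (use WP in simp)
qed

lemma submatrix_single:
  assumes "i < dim_row A" "j < dim_col A"
  shows "det (submatrix A {i} {j}) = A $$ (i,j)"
proof -
  have p: "pick {i} 0 = i" "pick {j} 0 = j" by (auto intro: Least_equality)
  have "submatrix A {i} {j} = mat 1 1 (\<lambda>(r,c). A $$ (pick {i} r, pick {j} c))"
    using submatrix_canon[of "{i}" A "{j}"] assms by simp
  then have M: "submatrix A {i} {j} \<in> carrier_mat 1 1" "submatrix A {i} {j} $$ (0,0) = A $$ (i,j)" using p by auto
  show ?thesis using det_single[OF M(1)] M(2) by simp
qed

lemma WTE_e01:
  fixes A :: "'a::linordered_field mat"
  assumes W: "WTE A" shows "essentially_01 A"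
  unfolding essentially_01_def
proof (intro allI impI)
  fix i j k assume i: "i < dim_row A" and j: "j < dim_col A" and k: "k < dim_col A"
    and nj: "A $$ (i,j) \<noteq> 0" and nk: "A $$ (i,k) \<noteq> 0"
  have dj: "det (submatrix A {i} {j}) = A $$ (i,j)" by (rule submatrix_single[OF i j])
  have dk: "det (submatrix A {i} {k}) = A $$ (i,k)" by (rule submatrix_single[OF i k])
  have "\<bar>det (submatrix A {i} {j})\<bar> = \<bar>det (submatrix A {i} {k})\<bar>"
    by (rule WTED[OF W]) (use i j k nj nk dj dk in auto)
  then show "\<bar>A $$ (i,j)\<bar> = \<bar>A $$ (i,k)\<bar>" using dj dk by simp
qed

lemma WTE_good:
  fixes A :: "'a::linordered_field mat"
  assumes "pivot_trim_step\<^sup>*\<^sup>* A B" "WTE A" shows "essentially_01 B"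
proof -
  have "WTE B" using assms by induction (auto intro: WTE_step)
  then show ?thesis by (rule WTE_e01)
qed

definition Good :: "'a::linordered_field mat \<Rightarrow> bool" where
  "Good A \<longleftrightarrow> (\<forall>B. pivot_trim_step\<^sup>*\<^sup>* A B \<longrightarrow> essentially_01 B)"

lemma Good_step: "Good A \<Longrightarrow> pivot_trim_step A B \<Longrightarrow> Good B"
  unfolding Good_def by (meson converse_rtranclp_into_rtranclp)

lemma Good_e01: "Good A \<Longrightarrow> essentially_01 A"
  unfolding Good_def by blast

definition pre :: "nat set \<Rightarrow> nat set \<Rightarrow> nat set" where
  "pre R X = {r\<in>{..<card R}. pick R r \<in> X}"

lemma pre_props:
  assumes "finite R" "X \<subseteq> R"
  shows "pick R ` pre R X = X" "card (pre R X) = card X" "pre R X \<subseteq> {..<card R}"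
proof -
  have "pick R ` pre R X = pick R ` {..<card R} \<inter> X" unfolding pre_def by auto
  then show 1: "pick R ` pre R X = X" using pick_image_lessThan[OF assms(1)] assms(2) by auto
  show "pre R X \<subseteq> {..<card R}" unfolding pre_def by auto
  then have "inj_on (pick R) (pre R X)" using pick_strict_mono strict_mono_on_imp_inj_on inj_on_subset by blast
  then show "card (pre R X) = card X" using card_image 1 by fastforce
qed

lemma trim_minor:
  fixes A :: "'a::linordered_field mat"
  assumes p: "is_pivot A i j" and I: "I \<subseteq> {..<dim_row A}" and K: "K \<subseteq> {..<dim_col A}"
    and c: "card I = card K" and i: "i \<in> I" and j: "j \<in> K"
  shows "\<bar>det (submatrix A I K)\<bar> = \<bar>A $$ (i,j)\<bar> *
     \<bar>det (submatrix (trim_mat A i j) (pre ({..<dim_row A} - {i}) (I - {i})) (pre ({..<dim_col A} - {j}) (K - {j})))\<bar>"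
proof -
  let ?B = "pivot_mat A i j"
  define R where "R = {..<dim_row A} - {i}"
  define C where "C = {..<dim_col A} - {j}"
  have R: "R \<subseteq> {..<dim_row ?B}" and C: "C \<subseteq> {..<dim_col ?B}" unfolding R_def C_def by auto
  have fR: "finite R" "finite C" unfolding R_def C_def by auto
  have sI: "I - {i} \<subseteq> R" and sK: "K - {j} \<subseteq> C" using I K unfolding R_def C_def by auto
  have "submatrix (trim_mat A i j) (pre R (I - {i})) (pre C (K - {j})) = submatrix ?B (I - {i}) (K - {j})"
    unfolding trim_eq R_def[symmetric] C_def[symmetric]
    using submatrix_submatrix[OF R C pre_props(3)[OF fR(1) sI] pre_props(3)[OF fR(2) sK]]
      pre_props(1)[OF fR(1) sI] pre_props(1)[OF fR(2) sK] by simp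
  then have e: "submatrix (trim_mat A i j) (pre R (I - {i})) (pre C (K - {j})) = submatrix ?B (I - {i}) (K - {j})" by simp
  have I': "I \<subseteq> {..<dim_row ?B}" and K': "K \<subseteq> {..<dim_col ?B}" using I K by auto
  have ij: "i < dim_row A" using p unfolding is_pivot_def by auto
  have z: "\<And>r. r \<in> I \<Longrightarrow> r \<noteq> i \<Longrightarrow> ?B $$ (r, j) = 0" using pivot_col[OF p] I by auto
  have "\<bar>det (submatrix ?B I K)\<bar> = \<bar>?B $$ (i,j)\<bar> * \<bar>det (submatrix ?B (I-{i}) (K-{j}))\<bar>"
    by (rule minor_expand[OF I' K' c i j z])
  moreover have "?B $$ (i,j) = 1" using pivot_col[OF p ij] by simp
  moreover have "det (submatrix ?B I K) = det (submatrix A I K) / A $$ (i,j)" by (rule pivot_minor[OF p I K c i])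
  moreover have "A $$ (i,j) \<noteq> 0" using p unfolding is_pivot_def by auto
  ultimately show ?thesis using e unfolding R_def C_def by (simp add: abs_divide field_simps)
qed

lemma trim_dims: "i < dim_row A \<Longrightarrow> j < dim_col A \<Longrightarrow>
   dim_row (trim_mat A i j) = card ({..<dim_row A} - {i}) \<and> dim_col (trim_mat A i j) = card ({..<dim_col A} - {j})"
  unfolding trim_eq using submatrix_canon[of "{..<dim_row A} - {i}" "pivot_mat A i j" "{..<dim_col A} - {j}"] by auto

lemma exists_pivot_in_col:
  fixes A :: "'a::field mat"
  assumes I: "I \<subseteq> {..<dim_row A}" and K: "K \<subseteq> {..<dim_col A}" and c: "card I = card K"
    and j: "j \<in> K" and nz: "det (submatrix A I K) \<noteq> 0"
  shows "\<exists>i\<in>I. A $$ (i,j) \<noteq> 0"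
  using minor_zero_col[OF I K c j] nz by blast

lemma good_WTE_aux:
  fixes A :: "'a::linordered_field mat"
  assumes "Good A" "I \<subseteq> {..<dim_row A}" "K \<subseteq> {..<dim_col A}" "L \<subseteq> {..<dim_col A}"
    "card K = card I" "card L = card I" "det (submatrix A I K) \<noteq> 0" "det (submatrix A I L) \<noteq> 0"
  shows "\<bar>det (submatrix A I K)\<bar> = \<bar>det (submatrix A I L)\<bar>"
  using assms
proof (induction "card I" arbitrary: A I K L)
  case 0
  have "finite I" "finite K" "finite L" using "0.prems" finite_subset by blast+
  then have "K = {}" "L = {}" using "0.prems" "0.hyps" by auto
  then show ?case by simp
next
  case (Suc k)
  note G = Suc.prems(1) and I = Suc.prems(2)
  have finI: "finite I" using I finite_subset by blast
  have claim: "\<bar>det (submatrix A I K)\<bar> = \<bar>det (submatrix A I L)\<bar>"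
    if K: "K \<subseteq> {..<dim_col A}" and L: "L \<subseteq> {..<dim_col A}" and cK: "card K = card I" and cL: "card L = card I"
      and nK: "det (submatrix A I K) \<noteq> 0" and nL: "det (submatrix A I L) \<noteq> 0" and KL: "K \<inter> L \<noteq> {}" for K L
  proof -
    obtain j where jK: "j \<in> K" and jL: "j \<in> L" using KL by blast
    obtain i where iI: "i \<in> I" and a: "A $$ (i,j) \<noteq> 0" using exists_pivot_in_col[OF I K cK[symmetric] jK nK] by blast
    have ij: "i < dim_row A" "j < dim_col A" using iI jK I K by auto
    have p: "is_pivot A i j" unfolding is_pivot_def using ij a by simp
    define T where "T = trim_mat A i j"
    have GT: "Good T" unfolding T_def by (rule Good_step[OF G]) (use p in \<open>auto simp: pivot_trim_step_def\<close>)
    define R where "R = {..<dim_row A} - {i}"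
    define C where "C = {..<dim_col A} - {j}"
    have fR: "finite R" "finite C" unfolding R_def C_def by auto
    have sI: "I - {i} \<subseteq> R" and sK: "K - {j} \<subseteq> C" and sL: "L - {j} \<subseteq> C" using I K L unfolding R_def C_def by auto
    have dT: "dim_row T = card R" "dim_col T = card C" using trim_dims[OF ij] unfolding T_def R_def C_def by auto
    have finK: "finite K" "finite L" using K L finite_subset by blast+
    have c1: "card (pre R (I - {i})) = k" using pre_props(2)[OF fR(1) sI] Suc.hyps(2) iI finI by simp
    have c2: "card (pre C (K - {j})) = k" using pre_props(2)[OF fR(2) sK] Suc.hyps(2) cK jK finK by simp
    have c3: "card (pre C (L - {j})) = k" using pre_props(2)[OF fR(2) sL] Suc.hyps(2) cL jL finK by simp
    have s1: "pre R (I - {i}) \<subseteq> {..<dim_row T}" using pre_props(3)[OF fR(1) sI] dT by simp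
    have s2: "pre C (K - {j}) \<subseteq> {..<dim_col T}" using pre_props(3)[OF fR(2) sK] dT by simp
    have s3: "pre C (L - {j}) \<subseteq> {..<dim_col T}" using pre_props(3)[OF fR(2) sL] dT by simp
    have tK: "\<bar>det (submatrix A I K)\<bar> = \<bar>A $$ (i,j)\<bar> * \<bar>det (submatrix T (pre R (I - {i})) (pre C (K - {j})))\<bar>"
      unfolding T_def R_def C_def by (rule trim_minor[OF p I K cK[symmetric] iI jK])
    have tL: "\<bar>det (submatrix A I L)\<bar> = \<bar>A $$ (i,j)\<bar> * \<bar>det (submatrix T (pre R (I - {i})) (pre C (L - {j})))\<bar>"
      unfolding T_def R_def C_def by (rule trim_minor[OF p I L cL[symmetric] iI jL])
    have "\<bar>det (submatrix T (pre R (I - {i})) (pre C (K - {j})))\<bar> = \<bar>det (submatrix T (pre R (I - {i})) (pre C (L - {j})))\<bar>"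
      by (rule Suc.hyps(1)[OF c1[symmetric] GT s1 s2 s3]) (use c1 c2 c3 tK tL nK nL in auto)
    then show ?thesis using tK tL by simp
  qed
  show ?case
  proof (cases "K \<inter> L = {}")
    case False
    then show ?thesis by (rule claim[OF Suc.prems(3-8)])
  next
    case disj: True
    note K = Suc.prems(3) and L = Suc.prems(4) and cK = Suc.prems(5) and cL = Suc.prems(6)
      and nK = Suc.prems(7) and nL = Suc.prems(8)
    have finK: "finite K" "finite L" using K L finite_subset by blast+
    show ?thesis
    proof (cases "k = 0")
      case True
      then have c1: "card I = 1" "card K = 1" "card L = 1" using Suc.hyps(2) cK cL by auto
      from c1(1) obtain i where e1: "I = {i}" by (rule card_1_singletonE)
      from c1(2) obtain j where e2: "K = {j}" by (rule card_1_singletonE)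
      from c1(3) obtain l where e3: "L = {l}" by (rule card_1_singletonE)
      note e = e1 e2 e3
      have ij: "i < dim_row A" "j < dim_col A" "l < dim_col A" using e I K L by auto
      have "essentially_01 A" by (rule Good_e01[OF G])
      moreover have d1: "det (submatrix A I K) = A $$ (i,j)" using submatrix_single[OF ij(1,2)] e by simp
      moreover have d2: "det (submatrix A I L) = A $$ (i,l)" using submatrix_single[OF ij(1,3)] e by simp
      moreover have nz: "A $$ (i,j) \<noteq> 0" "A $$ (i,l) \<noteq> 0" using nK nL d1 d2 by simp_all
      ultimately have "\<bar>A $$ (i,j)\<bar> = \<bar>A $$ (i,l)\<bar>"
        unfolding essentially_01_def using ij by blast
      then show ?thesis using d1 d2 by simp
    next
      case False
      have "K \<noteq> {}" using cK Suc.hyps(2) by auto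
      then obtain j where jK: "j \<in> K" by blast
      have jL: "j \<notin> L" using disj jK by blast
      obtain i where iI: "i \<in> I" and a: "A $$ (i,j) \<noteq> 0" using exists_pivot_in_col[OF I K cK[symmetric] jK nK] by blast
      have ij: "i < dim_row A" "j < dim_col A" using iI jK I K by auto
      have p: "is_pivot A i j" unfolding is_pivot_def using ij a by simp
      let ?B = "pivot_mat A i j"
      have I': "I \<subseteq> {..<dim_row ?B}" and L': "L \<subseteq> {..<dim_col ?B}" using I L by auto
      have "det (submatrix ?B I L) = det (submatrix A I L) / A $$ (i,j)" by (rule pivot_minor[OF p I L cL[symmetric] iI])
      then have nBL: "det (submatrix ?B I L) \<noteq> 0" using nL a by simp
      obtain l where lL: "l \<in> L" and nl: "det (submatrix ?B (I-{i}) (L-{l})) \<noteq> 0"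
        using minor_row_exists[OF I' L' cL[symmetric] iI nBL] by blast
      define K2 where "K2 = insert j (L - {l})"
      have K2: "K2 \<subseteq> {..<dim_col A}" using L ij unfolding K2_def by auto
      have cK2: "card K2 = card I" unfolding K2_def using finK jL lL cL Suc.hyps(2) by (simp add: card_Suc_Diff1)
      have K2': "K2 \<subseteq> {..<dim_col ?B}" using K2 by simp
      have z: "\<And>r. r \<in> I \<Longrightarrow> r \<noteq> i \<Longrightarrow> ?B $$ (r, j) = 0" using pivot_col[OF p] I by auto
      have "\<bar>det (submatrix ?B I K2)\<bar> = \<bar>?B $$ (i,j)\<bar> * \<bar>det (submatrix ?B (I-{i}) (K2-{j}))\<bar>"
        by (rule minor_expand[OF I' K2' cK2[symmetric] iI _ z]) (simp add: K2_def)
      moreover have "K2 - {j} = L - {l}" unfolding K2_def using jL by auto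
      moreover have "?B $$ (i,j) = 1" using pivot_col[OF p ij(1)] by simp
      ultimately have "det (submatrix ?B I K2) \<noteq> 0" using nl by simp
      moreover have "det (submatrix ?B I K2) = det (submatrix A I K2) / A $$ (i,j)"
        by (rule pivot_minor[OF p I K2 cK2[symmetric] iI])
      ultimately have nK2: "det (submatrix A I K2) \<noteq> 0" by simp
      have "card L \<ge> 2" using cL Suc.hyps(2) False by auto
      have "L - {l} \<noteq> {}"
      proof
        assume "L - {l} = {}"
        then have "L \<subseteq> {l}" by auto
        then have "card L \<le> 1" using card_mono[of "{l}" L] by simp
        then show False using \<open>card L \<ge> 2\<close> by simp
      qed
      then have "K2 \<inter> L \<noteq> {}" unfolding K2_def by auto
      moreover have "K \<inter> K2 \<noteq> {}" using jK unfolding K2_def by auto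
      ultimately show ?thesis using claim[OF K K2 cK cK2 nK nK2] claim[OF K2 L cK2 cL nK2 nL] by simp
    qed
  qed
qed

lemma sub_rows_cols:
  assumes I: "I \<subseteq> {..<dim_row A}" and K: "K \<subseteq> {..<dim_col A}"
  shows "submatrix (submatrix A I UNIV) UNIV K = submatrix A I K"
proof -
  have finI: "finite I" using I finite_subset by blast
  have r1: "submatrix A I UNIV = submatrix A {a\<in>I. a < dim_row A} {a\<in>UNIV. a < dim_col A}" by (rule submatrix_restrict)
  have s1: "{a\<in>I. a < dim_row A} = I" "{a\<in>UNIV. a < dim_col A} = {..<dim_col A}" using I by auto
  have e1: "submatrix A I UNIV = submatrix A I {..<dim_col A}" using r1 unfolding s1 .
  define C where "C = submatrix A I {..<dim_col A}"
  have dC: "dim_row C = card I" "dim_col C = dim_col A" unfolding C_def using submatrix_canon[of I A "{..<dim_col A}"] I by auto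
  have r2: "submatrix C UNIV K = submatrix C {a\<in>UNIV. a < dim_row C} {a\<in>K. a < dim_col C}" by (rule submatrix_restrict)
  have s2: "{a\<in>UNIV. a < dim_row C} = {..<card I}" "{a\<in>K. a < dim_col C} = K" using dC K by auto
  have e2: "submatrix C UNIV K = submatrix C {..<card I} K" using r2 unfolding s2 .
  have e3: "submatrix C {..<card I} K = submatrix A (pick I ` {..<card I}) (pick {..<dim_col A} ` K)"
    unfolding C_def by (rule submatrix_submatrix[OF I]) (use K in auto)
  have e4: "pick I ` {..<card I} = I" by (rule pick_image_lessThan[OF finI])
  have e5: "pick {..<dim_col A} ` K = K"
  proof -
    have "pick {..<dim_col A} ` K = (\<lambda>x. x) ` K" using K pick_lessThan by (intro image_cong) auto
    then show ?thesis by simp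
  qed
  show ?thesis unfolding e1 C_def[symmetric] e2 e3 e4 e5 ..
qed

lemma TE_iff_WTE:
  fixes A :: "'a::linordered_field mat"
  shows "totally_equimodular A \<longleftrightarrow> WTE A"
proof
  assume T: "totally_equimodular A"
  show "WTE A" unfolding WTE_def
  proof (intro allI impI)
    fix I K L assume I: "I \<subseteq> {..<dim_row A}" and K: "K \<subseteq> {..<dim_col A}" and L: "L \<subseteq> {..<dim_col A}"
      and cK: "card K = card I" and cL: "card L = card I"
      and nK: "det (submatrix A I K) \<noteq> 0" and nL: "det (submatrix A I L) \<noteq> 0"
    define C where "C = submatrix A I UNIV"
    have dC: "dim_row C = card I" "dim_col C = dim_col A"
    proof -
      have "{i. i < dim_row A \<and> i \<in> I} = I" "{j. j < dim_col A \<and> j \<in> UNIV} = {..<dim_col A}" using I by auto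
      then show "dim_row C = card I" "dim_col C = dim_col A" unfolding C_def dim_submatrix by auto
    qed
    have eK: "submatrix C UNIV K = submatrix A I K" unfolding C_def by (rule sub_rows_cols[OF I K])
    have eL: "submatrix C UNIV L = submatrix A I L" unfolding C_def by (rule sub_rows_cols[OF I L])
    have fr: "full_row_rank C" by (rule full_row_rank_minor[of K]) (use K cK dC eK nK in auto)
    have fr': "full_row_rank (submatrix A I UNIV)" using fr C_def by simp
    have EC: "equimodular C" unfolding C_def by (rule T[unfolded totally_equimodular_def, rule_format, OF I fr'])
    have K2: "K \<subseteq> {..<dim_col C}" "L \<subseteq> {..<dim_col C}" using K L dC by auto
    have c2: "card K = dim_row C" "card L = dim_row C" using cK cL dC by auto
    have n2: "det (submatrix C UNIV K) \<noteq> 0" "det (submatrix C UNIV L) \<noteq> 0" using nK nL eK eL by auto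
    have "\<bar>det (submatrix C UNIV K)\<bar> = \<bar>det (submatrix C UNIV L)\<bar>"
      by (rule EC[unfolded equimodular_def, THEN conjunct2, rule_format, OF K2 c2 n2])
    then show "\<bar>det (submatrix A I K)\<bar> = \<bar>det (submatrix A I L)\<bar>" using eK eL by simp
  qed
next
  assume W: "WTE A"
  show "totally_equimodular A" unfolding totally_equimodular_def
  proof (intro allI impI)
    fix I assume I: "I \<subseteq> {..<dim_row A}" and fr: "full_row_rank (submatrix A I UNIV)"
    define C where "C = submatrix A I UNIV"
    have dC: "dim_row C = card I" "dim_col C = dim_col A"
    proof -
      have "{i. i < dim_row A \<and> i \<in> I} = I" "{j. j < dim_col A \<and> j \<in> UNIV} = {..<dim_col A}" using I by auto
      then show "dim_row C = card I" "dim_col C = dim_col A" unfolding C_def dim_submatrix by auto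
    qed
    show "equimodular (submatrix A I UNIV)" unfolding equimodular_def C_def[symmetric]
    proof (intro conjI allI impI)
      show "full_row_rank C" using fr C_def by simp
      fix J K assume J: "J \<subseteq> {..<dim_col C}" and K: "K \<subseteq> {..<dim_col C}" and cJ: "card J = dim_row C"
        and cK: "card K = dim_row C" and nJ: "det (submatrix C UNIV J) \<noteq> 0" and nK: "det (submatrix C UNIV K) \<noteq> 0"
      have J': "J \<subseteq> {..<dim_col A}" and K': "K \<subseteq> {..<dim_col A}" using J K dC by auto
      have eJ: "submatrix C UNIV J = submatrix A I J" unfolding C_def by (rule sub_rows_cols[OF I J'])
      have eK: "submatrix C UNIV K = submatrix A I K" unfolding C_def by (rule sub_rows_cols[OF I K'])
      show "\<bar>det (submatrix C UNIV J)\<bar> = \<bar>det (submatrix C UNIV K)\<bar>"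
        unfolding eJ eK by (rule WTED[OF W I J' K']) (use cJ cK dC nJ nK eJ eK in auto)
    qed
  qed
qed

theorem mainTheorem1:
  fixes A :: "rat mat"
  shows "totally_equimodular A \<longleftrightarrow>
    (\<forall>B. pivot_trim_step\<^sup>*\<^sup>* A B \<longrightarrow> essentially_01 B)"
proof -
  have "WTE A \<longleftrightarrow> Good A"
  proof
    assume "WTE A" then show "Good A" unfolding Good_def by (intro allI impI) (rule WTE_good)
  next
    assume G: "Good A" show "WTE A" unfolding WTE_def
      by (intro allI impI) (rule good_WTE_aux[OF G]; assumption)
  qed
  then show ?thesis unfolding TE_iff_WTE Good_def .
qed

end
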